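(* Let $k$ be an algebraically closed field, $\Lambda$ a connected locally bounded $k$-category, and $G$ a group of $k$-linear automorphisms of $\Lambda$ which acts freely on $[\mathrm{ind}\Lambda]$. Let $L$ be a line in $\Lambda$ and $B_L$ its associated $\Lambda$-module. If $B_L$ is weakly-$G$-periodic, then $G_{B_L}\cong\mathbb{Z}$.
   Context: A locally bounded $k$-category: endomorphism algebras local, distinct objects non-isomorphic, and for each object $x$, $\sum_y\dim_k\Lambda(x,y)<\infty$, $\sum_y\dim_k\Lambda(y,x)<\infty$. A $\Lambda$-module is a contravariant $k$-linear functor $\Lambda\to\mathrm{MOD}\,k$; $\mathrm{supp}M$ is the full subcategory of objects $x$ with $M(x)\neq0$. $[\mathrm{ind}\Lambda]$ is the set of isomorphism classes of finite dimensional indecomposable $\Lambda$-modules; for $g\in G$, ${}^gM=M\circ g^{-1}$; $G$ acts freely on $[\mathrm{ind}\Lambda]$ if ${}^gM\not\cong M$ for every indecomposable finite dimensional $M$ and $1\neq g\in G$ (this implies $G$ acts freely on the objects of $\Lambda$). A full subcategory $L$ is convex if each path in the ordinary quiver of $\Lambda$ with source and terminal in $L$ has all its points in $L$. A line is a convex full subcategory isomorphic to the path category of a linear quiver (of type $A_n$, $A_\infty$ or $A_\infty^\infty$). For a line $L$, $B_L$ is the $\Lambda$-module with $B_L(x)=k$ for $x\in L$, $B_L(\alpha)\neq0$ for every nonzero morphism $\alpha$ of $L$, and $B_L(x)=0$ for $x\notin L$. $G_M=\{g\in G\mid {}^gM\cong M\}$. A locally finite dimensional indecomposable $\Lambda$-module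 $Y$ (i.e. $\dim_kY(x)<\infty$ for all $x$) is weakly-$G$-periodic if $\mathrm{supp}Y$ is infinite and $(\mathrm{supp}Y)/G_Y$ is finite. *)

theory Defs
  imports "HOL-Computational_Algebra.Polynomial" "HOL-Algebra.Elementary_Groups"
begin

definition kspace :: "nat \<Rightarrow> (nat \<Rightarrow> 'k::field) set" where
  "kspace n = {v. \<forall>i\<ge>n. v i = 0}"

definition vzero :: "nat \<Rightarrow> 'k::field" where "vzero = (\<lambda>_. 0)"
definition vadd :: "(nat \<Rightarrow> 'k::field) \<Rightarrow> (nat \<Rightarrow> 'k) \<Rightarrow> (nat \<Rightarrow> 'k)" where
  "vadd v w = (\<lambda>i. v i + w i)"
definition vsmult :: "'k::field \<Rightarrow> (nat \<Rightarrow> 'k) \<Rightarrow> (nat \<Rightarrow> 'k)" where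
  "vsmult c v = (\<lambda>i. c * v i)"

definition linear_on :: "nat \<Rightarrow> nat \<Rightarrow> ((nat \<Rightarrow> 'k::field) \<Rightarrow> (nat \<Rightarrow> 'k)) \<Rightarrow> bool" where
  "linear_on n m f \<longleftrightarrow> (\<forall>v\<in>kspace n. f v \<in> kspace m) \<and>
     (\<forall>c. \<forall>v\<in>kspace n. \<forall>w\<in>kspace n. f (vadd (vsmult c v) w) = vadd (vsmult c (f v)) (f w))"

inductive_set kspan :: "(nat \<Rightarrow> 'k::field) set \<Rightarrow> (nat \<Rightarrow> 'k) set" for S where
  span_zero: "vzero \<in> kspan S"
| span_step: "s \<in> S \<Longrightarrow> v \<in> kspan S \<Longrightarrow> vadd (vsmult c s) v \<in> kspan S"

text \<open>Objects are the elements of type 'o. The Hom space from x to y is k^(hdim x y),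
  realised as kspace (hdim x y). kcomp x y z a b is the composite of a : x -> y
  followed by b : y -> z.\<close>

record ('o, 'k) kcat =
  hdim :: "'o \<Rightarrow> 'o \<Rightarrow> nat"
  kid :: "'o \<Rightarrow> nat \<Rightarrow> 'k"
  kcomp :: "'o \<Rightarrow> 'o \<Rightarrow> 'o \<Rightarrow> (nat \<Rightarrow> 'k) \<Rightarrow> (nat \<Rightarrow> 'k) \<Rightarrow> (nat \<Rightarrow> 'k)"

definition hom :: "('o, 'k::field) kcat \<Rightarrow> 'o \<Rightarrow> 'o \<Rightarrow> (nat \<Rightarrow> 'k) set" where
  "hom C x y = kspace (hdim C x y)"

definition k_category :: "('o, 'k::field) kcat \<Rightarrow> bool" where
  "k_category C \<longleftrightarrow>
     (\<forall>x. kid C x \<in> hom C x x) \<and>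
     (\<forall>x y z a b. a \<in> hom C x y \<longrightarrow> b \<in> hom C y z \<longrightarrow> kcomp C x y z a b \<in> hom C x z) \<and>
     (\<forall>x y z a a' b c. a \<in> hom C x y \<longrightarrow> a' \<in> hom C x y \<longrightarrow> b \<in> hom C y z \<longrightarrow>
        kcomp C x y z (vadd (vsmult c a) a') b = vadd (vsmult c (kcomp C x y z a b)) (kcomp C x y z a' b)) \<and>
     (\<forall>x y z a b b' c. a \<in> hom C x y \<longrightarrow> b \<in> hom C y z \<longrightarrow> b' \<in> hom C y z \<longrightarrow>
        kcomp C x y z a (vadd (vsmult c b) b') = vadd (vsmult c (kcomp C x y z a b)) (kcomp C x y z a b')) \<and>
     (\<forall>x y z w a b d. a \<in> hom C x y \<longrightarrow> b \<in> hom C y z \<longrightarrow> d \<in> hom C z w \<longrightarrow>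
        kcomp C x y w a (kcomp C y z w b d) = kcomp C x z w (kcomp C x y z a b) d) \<and>
     (\<forall>x y a. a \<in> hom C x y \<longrightarrow> kcomp C x x y (kid C x) a = a \<and> kcomp C x y y a (kid C y) = a)"

definition is_unit_end :: "('o, 'k::field) kcat \<Rightarrow> 'o \<Rightarrow> (nat \<Rightarrow> 'k) \<Rightarrow> bool" where
  "is_unit_end C x a \<longleftrightarrow> a \<in> hom C x x \<and>
     (\<exists>b\<in>hom C x x. kcomp C x x x a b = kid C x \<and> kcomp C x x x b a = kid C x)"

definition local_end :: "('o, 'k::field) kcat \<Rightarrow> 'o \<Rightarrow> bool" where
  "local_end C x \<longleftrightarrow> kid C x \<noteq> vzero \<and>
     (\<forall>a\<in>hom C x x. \<forall>b\<in>hom C x x. \<not> is_unit_end C x a \<longrightarrow> \<not> is_unit_end C x b \<longrightarrow>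
        \<not> is_unit_end C x (vadd a b))"

definition obj_iso :: "('o, 'k::field) kcat \<Rightarrow> 'o \<Rightarrow> 'o \<Rightarrow> bool" where
  "obj_iso C x y \<longleftrightarrow> (\<exists>a\<in>hom C x y. \<exists>b\<in>hom C y x.
     kcomp C x y x a b = kid C x \<and> kcomp C y x y b a = kid C y)"

definition locally_bounded :: "('o, 'k::field) kcat \<Rightarrow> bool" where
  "locally_bounded C \<longleftrightarrow> k_category C \<and>
     (\<forall>x. local_end C x) \<and>
     (\<forall>x y. x \<noteq> y \<longrightarrow> \<not> obj_iso C x y) \<and>
     (\<forall>x. finite {y. hdim C x y \<noteq> 0} \<and> finite {y. hdim C y x \<noteq> 0})"

definition connected_kcat :: "('o, 'k::field) kcat \<Rightarrow> bool" where
  "connected_kcat C \<longleftrightarrow>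
     (\<forall>x y. (x, y) \<in> {(u, v). hdim C u v \<noteq> 0 \<or> hdim C v u \<noteq> 0}\<^sup>*)"

definition rad :: "('o, 'k::field) kcat \<Rightarrow> 'o \<Rightarrow> 'o \<Rightarrow> (nat \<Rightarrow> 'k) set" where
  "rad C x y = {a \<in> hom C x y. x = y \<longrightarrow> \<not> is_unit_end C x a}"

definition rad2 :: "('o, 'k::field) kcat \<Rightarrow> 'o \<Rightarrow> 'o \<Rightarrow> (nat \<Rightarrow> 'k) set" where
  "rad2 C x y = kspan {kcomp C x z y a b | z a b. a \<in> rad C x z \<and> b \<in> rad C z y}"

text \<open>Arrow x -> y of the ordinary quiver: rad(x,y) / rad^2(x,y) \<noteq> 0.\<close>
definition qarrow :: "('o, 'k::field) kcat \<Rightarrow> 'o \<Rightarrow> 'o \<Rightarrow> bool" where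
  "qarrow C x y \<longleftrightarrow> \<not> (rad C x y \<subseteq> rad2 C x y)"

definition qpath :: "('o, 'k::field) kcat \<Rightarrow> 'o list \<Rightarrow> bool" where
  "qpath C p \<longleftrightarrow> p \<noteq> [] \<and> (\<forall>i. Suc i < length p \<longrightarrow> qarrow C (p ! i) (p ! Suc i))"

definition convex :: "('o, 'k::field) kcat \<Rightarrow> 'o set \<Rightarrow> bool" where
  "convex C L \<longleftrightarrow> (\<forall>p. qpath C p \<longrightarrow> hd p \<in> L \<longrightarrow> last p \<in> L \<longrightarrow> set p \<subseteq> L)"

text \<open>Linear quivers: vertex set an interval of int (type A_n, A_infinity, A_infinity^infinity);
  ori m says the edge between m and m+1 is oriented m -> m+1 (otherwise m+1 -> m).\<close>
definition lin_index :: "int set \<Rightarrow> bool" where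
  "lin_index I \<longleftrightarrow> (\<exists>n::nat. n \<ge> 1 \<and> I = {0..<int n}) \<or> I = {0..} \<or> I = UNIV"

definition lpath :: "(int \<Rightarrow> bool) \<Rightarrow> int \<Rightarrow> int \<Rightarrow> bool" where
  "lpath ori i j \<longleftrightarrow> (i \<le> j \<and> (\<forall>m. i \<le> m \<and> m < j \<longrightarrow> ori m)) \<or>
                      (j \<le> i \<and> (\<forall>m. j \<le> m \<and> m < i \<longrightarrow> \<not> ori m))"

text \<open>A line: a convex full subcategory L together with a k-linear isomorphism from the path
  category kQ of a linear quiver Q onto L; phi is the object bijection and e i j the image of the
  (unique) path from i to j.\<close>
definition is_line :: "('o, 'k::field) kcat \<Rightarrow> 'o set \<Rightarrow> bool" where
  "is_line C L \<longleftrightarrow> convex C L \<and>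
     (\<exists>I ori (\<phi>::int \<Rightarrow> 'o) e. lin_index I \<and> bij_betw \<phi> I L \<and>
        (\<forall>i\<in>I. \<forall>j\<in>I. hdim C (\<phi> i) (\<phi> j) = (if lpath ori i j then 1 else 0)) \<and>
        (\<forall>i\<in>I. \<forall>j\<in>I. lpath ori i j \<longrightarrow> e i j \<in> hom C (\<phi> i) (\<phi> j) \<and> e i j \<noteq> vzero) \<and>
        (\<forall>i\<in>I. e i i = kid C (\<phi> i)) \<and>
        (\<forall>i\<in>I. \<forall>j\<in>I. \<forall>l\<in>I. lpath ori i j \<longrightarrow> lpath ori j l \<longrightarrow>
            kcomp C (\<phi> i) (\<phi> j) (\<phi> l) (e i j) (e j l) = e i l))"

text \<open>M(x) = kspace (mdim M x); for a : x -> y, mact M x y a : M(y) -> M(x).\<close>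
record ('o, 'k) kmod =
  mdim :: "'o \<Rightarrow> nat"
  mact :: "'o \<Rightarrow> 'o \<Rightarrow> (nat \<Rightarrow> 'k) \<Rightarrow> (nat \<Rightarrow> 'k) \<Rightarrow> (nat \<Rightarrow> 'k)"

definition is_module :: "('o, 'k::field) kcat \<Rightarrow> ('o, 'k) kmod \<Rightarrow> bool" where
  "is_module C M \<longleftrightarrow>
     (\<forall>x y a. a \<in> hom C x y \<longrightarrow> linear_on (mdim M y) (mdim M x) (mact M x y a)) \<and>
     (\<forall>x y a b c v. a \<in> hom C x y \<longrightarrow> b \<in> hom C x y \<longrightarrow> v \<in> kspace (mdim M y) \<longrightarrow>
        mact M x y (vadd (vsmult c a) b) v = vadd (vsmult c (mact M x y a v)) (mact M x y b v)) \<and>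
     (\<forall>x v. v \<in> kspace (mdim M x) \<longrightarrow> mact M x x (kid C x) v = v) \<and>
     (\<forall>x y z a b v. a \<in> hom C x y \<longrightarrow> b \<in> hom C y z \<longrightarrow> v \<in> kspace (mdim M z) \<longrightarrow>
        mact M x z (kcomp C x y z a b) v = mact M x y a (mact M y z b v))"

definition mod_iso :: "('o, 'k::field) kcat \<Rightarrow> ('o, 'k) kmod \<Rightarrow> ('o, 'k) kmod \<Rightarrow> bool" where
  "mod_iso C M N \<longleftrightarrow> (\<exists>f. (\<forall>x. linear_on (mdim M x) (mdim N x) (f x) \<and>
        bij_betw (f x) (kspace (mdim M x)) (kspace (mdim N x))) \<and>
     (\<forall>x y a v. a \<in> hom C x y \<longrightarrow> v \<in> kspace (mdim M y) \<longrightarrow>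
        f x (mact M x y a v) = mact N x y a (f y v)))"

definition is_submodule :: "('o, 'k::field) kcat \<Rightarrow> ('o, 'k) kmod \<Rightarrow> ('o \<Rightarrow> (nat \<Rightarrow> 'k) set) \<Rightarrow> bool" where
  "is_submodule C M U \<longleftrightarrow>
     (\<forall>x. U x \<subseteq> kspace (mdim M x) \<and> vzero \<in> U x \<and>
        (\<forall>u\<in>U x. \<forall>w\<in>U x. \<forall>c. vadd (vsmult c u) w \<in> U x)) \<and>
     (\<forall>x y a u. a \<in> hom C x y \<longrightarrow> u \<in> U y \<longrightarrow> mact M x y a u \<in> U x)"

definition indecomposable :: "('o, 'k::field) kcat \<Rightarrow> ('o, 'k) kmod \<Rightarrow> bool" where
  "indecomposable C M \<longleftrightarrow> is_module C M \<and> (\<exists>x. mdim M x \<noteq> 0) \<and>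
     (\<forall>U V. is_submodule C M U \<longrightarrow> is_submodule C M V \<longrightarrow>
        (\<forall>x. U x \<inter> V x = {vzero} \<and> {vadd u v | u v. u \<in> U x \<and> v \<in> V x} = kspace (mdim M x)) \<longrightarrow>
        (\<forall>x. U x = {vzero}) \<or> (\<forall>x. V x = {vzero}))"

definition supp :: "('o, 'k) kmod \<Rightarrow> 'o set" where
  "supp M = {x. mdim M x \<noteq> 0}"

type_synonym ('o, 'k) kaut = "('o \<Rightarrow> 'o) \<times> ('o \<Rightarrow> 'o \<Rightarrow> (nat \<Rightarrow> 'k) \<Rightarrow> (nat \<Rightarrow> 'k))"

text \<open>F is normalised to be the identity
  outside Hom(x,y) so that equality of automorphisms is HOL equality.\<close>
definition is_kaut :: "('o, 'k::field) kcat \<Rightarrow> ('o, 'k) kaut \<Rightarrow> bool" where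
  "is_kaut C g \<longleftrightarrow> bij (fst g) \<and>
     (\<forall>x y. linear_on (hdim C x y) (hdim C (fst g x) (fst g y)) (snd g x y) \<and>
        bij_betw (snd g x y) (hom C x y) (hom C (fst g x) (fst g y))) \<and>
     (\<forall>x y v. v \<notin> hom C x y \<longrightarrow> snd g x y v = v) \<and>
     (\<forall>x. snd g x x (kid C x) = kid C (fst g x)) \<and>
     (\<forall>x y z a b. a \<in> hom C x y \<longrightarrow> b \<in> hom C y z \<longrightarrow>
        snd g x z (kcomp C x y z a b) = kcomp C (fst g x) (fst g y) (fst g z) (snd g x y a) (snd g y z b))"

definition aut_comp :: "('o, 'k::field) kcat \<Rightarrow> ('o, 'k) kaut \<Rightarrow> ('o, 'k) kaut \<Rightarrow> ('o, 'k) kaut" where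
  "aut_comp C g h = (fst g \<circ> fst h,
     (\<lambda>x y v. if v \<in> hom C x y then snd g (fst h x) (fst h y) (snd h x y v) else v))"

definition aut_id :: "('o, 'k) kaut" where
  "aut_id = (id, (\<lambda>x y v. v))"

definition aut_group :: "('o, 'k::field) kcat \<Rightarrow> ('o, 'k) kaut set \<Rightarrow> ('o, 'k) kaut monoid" where
  "aut_group C Gs = \<lparr>carrier = Gs, mult = aut_comp C, one = aut_id\<rparr>"

definition mod_twist :: "('o, 'k) kmod \<Rightarrow> ('o, 'k) kaut \<Rightarrow> ('o, 'k) kmod" where
  "mod_twist M h = \<lparr>mdim = mdim M \<circ> fst h,
     mact = (\<lambda>x y a. mact M (fst h x) (fst h y) (snd h x y a))\<rparr>"

definition gtwist :: "('o, 'k::field) kcat \<Rightarrow> ('o, 'k) kaut set \<Rightarrow> ('o, 'k) kaut \<Rightarrow> ('o, 'k) kmod \<Rightarrow> ('o, 'k) kmod" where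
  "gtwist C Gs g M = mod_twist M (inv\<^bsub>aut_group C Gs\<^esub> g)"

definition acts_freely_ind :: "('o, 'k::field) kcat \<Rightarrow> ('o, 'k) kaut set \<Rightarrow> bool" where
  "acts_freely_ind C Gs \<longleftrightarrow> (\<forall>M g. is_module C M \<longrightarrow> finite (supp M) \<longrightarrow> indecomposable C M \<longrightarrow>
      g \<in> Gs \<longrightarrow> g \<noteq> aut_id \<longrightarrow> \<not> mod_iso C (gtwist C Gs g M) M)"

definition stab :: "('o, 'k::field) kcat \<Rightarrow> ('o, 'k) kaut set \<Rightarrow> ('o, 'k) kmod \<Rightarrow> ('o, 'k) kaut set" where
  "stab C Gs M = {g \<in> Gs. mod_iso C (gtwist C Gs g M) M}"

definition weakly_G_periodic :: "('o, 'k::field) kcat \<Rightarrow> ('o, 'k) kaut set \<Rightarrow> ('o, 'k) kmod \<Rightarrow> bool" where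
  "weakly_G_periodic C Gs Y \<longleftrightarrow> is_module C Y \<and> indecomposable C Y \<and> infinite (supp Y) \<and>
     finite ((\<lambda>x. (\<lambda>g. fst g x) ` stab C Gs Y) ` supp Y)"

definition is_BL :: "('o, 'k::field) kcat \<Rightarrow> 'o set \<Rightarrow> ('o, 'k) kmod \<Rightarrow> bool" where
  "is_BL C L B \<longleftrightarrow> is_module C B \<and> (\<forall>x. mdim B x = (if x \<in> L then 1 else 0)) \<and>
     (\<forall>x\<in>L. \<forall>y\<in>L. \<forall>a\<in>hom C x y. a \<noteq> vzero \<longrightarrow> (\<exists>v\<in>kspace (mdim B y). mact B x y a v \<noteq> vzero))"

end

theory Submission
  imports Defs
begin

lemma kspace_zero[simp]: "vzero \<in> kspace n"
  by (simp add: kspace_def vzero_def)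

lemma kspace_comb: "v \<in> kspace n \<Longrightarrow> w \<in> kspace n \<Longrightarrow> vadd (vsmult c v) w \<in> kspace n"
  by (simp add: kspace_def vadd_def vsmult_def)

lemma kspace_smult: "v \<in> kspace n \<Longrightarrow> vsmult c v \<in> kspace n"
  by (simp add: kspace_def vsmult_def)

lemma kspace0: "kspace 0 = {vzero}"
  by (auto simp: kspace_def vzero_def)

lemma kspace_nz: "n \<noteq> 0 \<Longrightarrow> \<exists>v\<in>kspace n. v \<noteq> (vzero :: nat \<Rightarrow> 'k::field)"
proof -
  assume "n \<noteq> 0"
  define v :: "nat \<Rightarrow> 'k" where "v = (\<lambda>i. if i = 0 then 1 else 0)"
  have "v \<in> kspace n" using \<open>n \<noteq> 0\<close> by (auto simp: kspace_def v_def)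
  moreover have "v \<noteq> vzero" by (auto simp: v_def vzero_def fun_eq_iff)
  ultimately show ?thesis by blast
qed

lemma kspace_bij_zero:
  fixes f :: "(nat \<Rightarrow> 'k::field) \<Rightarrow> (nat \<Rightarrow> 'k)"
  assumes "bij_betw f (kspace m) (kspace n :: (nat \<Rightarrow> 'k::field) set)"
  shows "m = 0 \<longleftrightarrow> n = 0"
proof
  assume "m = 0"
  have "kspace n = f ` kspace m" using assms by (simp add: bij_betw_def)
  then have "kspace n = {f vzero}" using \<open>m = 0\<close> by (simp add: kspace0)
  then show "n = 0" using kspace_nz[of n] kspace_zero[of n] by (metis singletonD)
next
  assume n: "n = 0"
  show "m = 0"
  proof (rule ccontr)
    assume "m \<noteq> 0"
    then obtain v :: "nat \<Rightarrow> 'k" where v: "v \<in> kspace m" "v \<noteq> vzero" using kspace_nz by blast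
    have "f v \<in> kspace n" "f vzero \<in> kspace n" using assms v by (auto dest: bij_betwE)
    then have "f v = f vzero" using n by (simp add: kspace0)
    then show False using assms v by (metis bij_betw_def inj_onD kspace_zero)
  qed
qed

lemma vadd_zero_right[simp]: "vadd v vzero = v" by (simp add: vadd_def vzero_def)
lemma vadd_zero_left[simp]: "vadd vzero v = v" by (simp add: vadd_def vzero_def)
lemma vsmult_zero[simp]: "vsmult c vzero = vzero" by (simp add: vsmult_def vzero_def)
lemma vsmult_one[simp]: "vsmult 1 v = v" by (simp add: vsmult_def)
lemma vsmult_0[simp]: "vsmult 0 v = vzero" by (simp add: vsmult_def vzero_def)
lemma vsmult_assoc[simp]: "vsmult c (vsmult d v) = vsmult (c*d) v" by (simp add: vsmult_def mult.assoc)

lemma lin_zero: "linear_on n m (f :: (nat \<Rightarrow> 'k::field) \<Rightarrow> (nat \<Rightarrow> 'k)) \<Longrightarrow> f vzero = vzero"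
proof -
  assume "linear_on n m f"
  then have "f (vadd (vsmult 1 vzero) vzero) = vadd (vsmult 1 (f vzero)) (f vzero)"
    unfolding linear_on_def by (meson kspace_zero)
  then have "f vzero = vadd (f vzero) (f vzero)" by simp
  then have "\<forall>i. f vzero i + f vzero i = f vzero i" by (metis vadd_def)
  moreover have "\<And>a::'k. a + a = a \<Longrightarrow> a = 0" by (metis add.right_neutral add_left_cancel)
  ultimately show ?thesis by (auto simp: vzero_def fun_eq_iff)
qed

lemma lin_smult: "linear_on n m f \<Longrightarrow> v \<in> kspace n \<Longrightarrow> f (vsmult c v) = vsmult c (f v)"
proof -
  assume a: "linear_on n m f" "v \<in> kspace n"
  then have "f (vadd (vsmult c v) vzero) = vadd (vsmult c (f v)) (f vzero)"
    unfolding linear_on_def by (meson kspace_zero)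
  then show ?thesis using lin_zero[OF a(1)] by simp
qed

lemma linear_on_id: "linear_on n n (\<lambda>v. v)"
  by (simp add: linear_on_def)

lemma linear_on_comp: "linear_on n m f \<Longrightarrow> linear_on m p g \<Longrightarrow> linear_on n p (g \<circ> f)"
  unfolding linear_on_def by (simp add: kspace_comb kspace_smult)

lemma linear_on_inv:
  fixes f :: "(nat \<Rightarrow> 'k::field) \<Rightarrow> (nat \<Rightarrow> 'k)"
  assumes "linear_on n m f" "bij_betw f (kspace n) (kspace m)"
  shows "linear_on m n (inv_into (kspace n) f)"
proof -
  let ?g = "inv_into (kspace n) f"
  have g_in: "\<And>v. v \<in> kspace m \<Longrightarrow> ?g v \<in> kspace n"
    using assms(2) by (metis bij_betw_def inv_into_into)
  have fg: "\<And>v. v \<in> kspace m \<Longrightarrow> f (?g v) = v"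
    using assms(2) by (simp add: bij_betw_def f_inv_into_f)
  show ?thesis unfolding linear_on_def
  proof (intro conjI ballI allI)
    fix v :: "nat \<Rightarrow> 'k" assume "v \<in> kspace m" then show "?g v \<in> kspace n" by (rule g_in)
  next
    fix c and v w :: "nat \<Rightarrow> 'k" assume v: "v \<in> kspace m" and w: "w \<in> kspace m"
    let ?u = "vadd (vsmult c (?g v)) (?g w)"
    have u: "?u \<in> kspace n" using g_in v w kspace_comb by blast
    have "f ?u = vadd (vsmult c v) w"
      using assms(1) g_in[OF v] g_in[OF w] fg[OF v] fg[OF w] unfolding linear_on_def by metis
    then have "?g (f ?u) = ?g (vadd (vsmult c v) w)" by simp
    moreover have "?g (f ?u) = ?u"
      using u assms(2) by (meson bij_betw_def inv_into_f_f)
    ultimately show "?g (vadd (vsmult c v) w) = ?u" by simp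
  qed
qed

lemma mod_iso_trans:
  fixes M N P :: "('o, 'k::field) kmod"
  assumes "mod_iso C M N" "mod_iso C N P"
  shows "mod_iso C M P"
proof -
  obtain f where f: "\<forall>x. linear_on (mdim M x) (mdim N x) (f x) \<and>
        bij_betw (f x) (kspace (mdim M x)) (kspace (mdim N x))"
    "\<forall>x y a v. a \<in> hom C x y \<longrightarrow> v \<in> kspace (mdim M y) \<longrightarrow>
        f x (mact M x y a v) = mact N x y a (f y v)"
    using assms(1) unfolding mod_iso_def by blast
  obtain g where g: "\<forall>x. linear_on (mdim N x) (mdim P x) (g x) \<and>
        bij_betw (g x) (kspace (mdim N x)) (kspace (mdim P x))"
    "\<forall>x y a v. a \<in> hom C x y \<longrightarrow> v \<in> kspace (mdim N y) \<longrightarrow>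
        g x (mact N x y a v) = mact P x y a (g y v)"
    using assms(2) unfolding mod_iso_def by blast
  show ?thesis unfolding mod_iso_def
  proof (intro exI[of _ "\<lambda>x. g x \<circ> f x"] conjI allI impI)
    fix x
    show "linear_on (mdim M x) (mdim P x) (g x \<circ> f x)" using f g linear_on_comp by blast
    show "bij_betw (g x \<circ> f x) (kspace (mdim M x)) (kspace (mdim P x))"
      using f g bij_betw_trans by blast
  next
    fix x y a and v :: "nat \<Rightarrow> 'k" assume "a \<in> hom C x y" "v \<in> kspace (mdim M y)"
    moreover have "f y v \<in> kspace (mdim N y)" using f(1) \<open>v \<in> _\<close> unfolding bij_betw_def by blast
    ultimately show "(g x \<circ> f x) (mact M x y a v) = mact P x y a ((g y \<circ> f y) v)"
      using f(2) g(2) by simp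
  qed
qed

lemma mod_iso_agree:
  fixes M N :: "('o, 'k::field) kmod"
  assumes "mdim M = mdim N"
    and "\<And>x y a v. a \<in> hom C x y \<Longrightarrow> v \<in> kspace (mdim M y) \<Longrightarrow> mact M x y a v = mact N x y a v"
  shows "mod_iso C M N"
  unfolding mod_iso_def
  by (rule exI[of _ "\<lambda>x v. v"]) (simp add: assms linear_on_id bij_betw_id[unfolded id_def])

lemma mod_iso_sym:
  fixes M N :: "('o, 'k::field) kmod"
  assumes "is_module C M" "mod_iso C M N"
  shows "mod_iso C N M"
proof -
  obtain f where f: "\<forall>x. linear_on (mdim M x) (mdim N x) (f x) \<and>
        bij_betw (f x) (kspace (mdim M x)) (kspace (mdim N x))"
    "\<forall>x y a v. a \<in> hom C x y \<longrightarrow> v \<in> kspace (mdim M y) \<longrightarrow>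
        f x (mact M x y a v) = mact N x y a (f y v)"
    using assms(2) unfolding mod_iso_def by blast
  let ?g = "\<lambda>x. inv_into (kspace (mdim M x)) (f x)"
  show ?thesis unfolding mod_iso_def
  proof (intro exI[of _ ?g] conjI allI impI)
    fix x
    show "linear_on (mdim N x) (mdim M x) (?g x)" using f linear_on_inv by blast
    show "bij_betw (?g x) (kspace (mdim N x)) (kspace (mdim M x))"
      using f bij_betw_inv_into by blast
  next
    fix x y a and w :: "nat \<Rightarrow> 'k" assume a: "a \<in> hom C x y" and w: "w \<in> kspace (mdim N y)"
    let ?v = "?g y w"
    have v: "?v \<in> kspace (mdim M y)" using f(1) w by (metis bij_betw_def inv_into_into)
    have fv: "f y ?v = w" using f(1) w by (simp add: bij_betw_def f_inv_into_f)
    have mv: "mact M x y a ?v \<in> kspace (mdim M x)"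
      using assms(1) a v unfolding is_module_def linear_on_def by blast
    have "f x (mact M x y a ?v) = mact N x y a w" using f(2) a v fv by metis
    then have "?g x (mact N x y a w) = ?g x (f x (mact M x y a ?v))" by simp
    also have "\<dots> = mact M x y a ?v" using mv f(1) by (meson bij_betw_def inv_into_f_f)
    finally show "?g x (mact N x y a w) = mact M x y a (?g y w)" .
  qed
qed

lemma kaut_hom: "is_kaut C k \<Longrightarrow> a \<in> hom C x y \<Longrightarrow> snd k x y a \<in> hom C (fst k x) (fst k y)"
  unfolding is_kaut_def bij_betw_def by blast

lemma mod_iso_twist:
  fixes M N :: "('o, 'k::field) kmod"
  assumes "mod_iso C M N" "is_kaut C k"
  shows "mod_iso C (mod_twist M k) (mod_twist N k)"
proof -
  obtain f where f: "\<forall>x. linear_on (mdim M x) (mdim N x) (f x) \<and>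
        bij_betw (f x) (kspace (mdim M x)) (kspace (mdim N x))"
    "\<forall>x y a v. a \<in> hom C x y \<longrightarrow> v \<in> kspace (mdim M y) \<longrightarrow>
        f x (mact M x y a v) = mact N x y a (f y v)"
    using assms(1) unfolding mod_iso_def by blast
  show ?thesis unfolding mod_iso_def
    apply (rule exI[of _ "\<lambda>x. f (fst k x)"])
    using f kaut_hom[OF assms(2)] by (simp add: mod_twist_def)
qed

lemma twist_comp:
  assumes "is_kaut C a" "is_kaut C b"
  shows "mod_iso C (mod_twist M (aut_comp C a b)) (mod_twist (mod_twist M a) b)"
  by (rule mod_iso_agree) (auto simp: mod_twist_def aut_comp_def)

lemma twist_id: "mod_iso C (mod_twist M aut_id) M"
  by (rule mod_iso_agree) (auto simp: mod_twist_def aut_id_def)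


lemma vdouble: "vadd z z = z \<Longrightarrow> z = (vzero :: nat \<Rightarrow> 'k::field)"
proof -
  assume "vadd z z = z"
  then have "\<forall>i. z i + z i = z i" by (metis vadd_def)
  moreover have "\<And>a::'k. a + a = a \<Longrightarrow> a = 0" by (metis add.right_neutral add_left_cancel)
  ultimately show ?thesis by (auto simp: vzero_def fun_eq_iff)
qed

lemma hom_zero[simp]: "vzero \<in> hom C x y" by (simp add: hom_def)
lemma hom_comb: "a \<in> hom C x y \<Longrightarrow> b \<in> hom C x y \<Longrightarrow> vadd (vsmult c a) b \<in> hom C x y"
  by (simp add: hom_def kspace_comb)
lemma hom_smult: "a \<in> hom C x y \<Longrightarrow> vsmult c a \<in> hom C x y"
  by (simp add: hom_def kspace_smult)

context
  fixes C :: "('o, 'k::field) kcat"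
  assumes kc: "k_category C"
begin

lemma kid_hom: "kid C x \<in> hom C x x" using conjunct1[OF kc[unfolded k_category_def]] by blast
lemma kc_closed: "a \<in> hom C x y \<Longrightarrow> b \<in> hom C y z \<Longrightarrow> kcomp C x y z a b \<in> hom C x z"
  using conjunct1[OF conjunct2[OF kc[unfolded k_category_def]]] by blast
lemma kc_linl: "a \<in> hom C x y \<Longrightarrow> a' \<in> hom C x y \<Longrightarrow> b \<in> hom C y z \<Longrightarrow>
    kcomp C x y z (vadd (vsmult c a) a') b = vadd (vsmult c (kcomp C x y z a b)) (kcomp C x y z a' b)"
  using conjunct1[OF conjunct2[OF conjunct2[OF kc[unfolded k_category_def]]]] by blast
lemma kc_linr: "a \<in> hom C x y \<Longrightarrow> b \<in> hom C y z \<Longrightarrow> b' \<in> hom C y z \<Longrightarrow>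
    kcomp C x y z a (vadd (vsmult c b) b') = vadd (vsmult c (kcomp C x y z a b)) (kcomp C x y z a b')"
  using conjunct1[OF conjunct2[OF conjunct2[OF conjunct2[OF kc[unfolded k_category_def]]]]] by blast
lemma kc_assoc: "a \<in> hom C x y \<Longrightarrow> b \<in> hom C y z \<Longrightarrow> d \<in> hom C z w \<Longrightarrow>
        kcomp C x y w a (kcomp C y z w b d) = kcomp C x z w (kcomp C x y z a b) d"
  using conjunct1[OF conjunct2[OF conjunct2[OF conjunct2[OF conjunct2[OF kc[unfolded k_category_def]]]]]] by blast
lemma kc_idl: "a \<in> hom C x y \<Longrightarrow> kcomp C x x y (kid C x) a = a"
  using conjunct2[OF conjunct2[OF conjunct2[OF conjunct2[OF conjunct2[OF kc[unfolded k_category_def]]]]]] by blast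
lemma kc_idr: "a \<in> hom C x y \<Longrightarrow> kcomp C x y y a (kid C y) = a"
  using conjunct2[OF conjunct2[OF conjunct2[OF conjunct2[OF conjunct2[OF kc[unfolded k_category_def]]]]]] by blast


lemma kc_zero_r: "a \<in> hom C x y \<Longrightarrow> kcomp C x y z a vzero = vzero"
proof -
  assume a: "a \<in> hom C x y"
  have "kcomp C x y z a (vadd (vsmult 1 vzero) vzero) = vadd (vsmult 1 (kcomp C x y z a vzero)) (kcomp C x y z a vzero)"
    using kc_linr[OF a hom_zero hom_zero] .
  then have "vadd (kcomp C x y z a vzero) (kcomp C x y z a vzero) = kcomp C x y z a vzero"
    by (metis vsmult_one vadd_zero_right)
  then show ?thesis by (rule vdouble)
qed

lemma kc_zero_l: "b \<in> hom C y z \<Longrightarrow> kcomp C x y z vzero b = vzero"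
proof -
  assume b: "b \<in> hom C y z"
  have "kcomp C x y z (vadd (vsmult 1 vzero) vzero) b = vadd (vsmult 1 (kcomp C x y z vzero b)) (kcomp C x y z vzero b)"
    using kc_linl[OF hom_zero hom_zero b] .
  then have "vadd (kcomp C x y z vzero b) (kcomp C x y z vzero b) = kcomp C x y z vzero b"
    by (metis vsmult_one vadd_zero_right)
  then show ?thesis by (rule vdouble)
qed

lemma kc_smult_l: "a \<in> hom C x y \<Longrightarrow> b \<in> hom C y z \<Longrightarrow>
   kcomp C x y z (vsmult c a) b = vsmult c (kcomp C x y z a b)"
  using kc_linl[of a x y vzero b z c] kc_zero_l by simp

lemma kc_smult_r: "a \<in> hom C x y \<Longrightarrow> b \<in> hom C y z \<Longrightarrow>
   kcomp C x y z a (vsmult c b) = vsmult c (kcomp C x y z a b)"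
  using kc_linr[of a x y b z vzero c] kc_zero_r by simp

end


definition res :: "('o, 'k::field) kcat \<Rightarrow> 'o \<Rightarrow> (nat \<Rightarrow> 'k) \<Rightarrow> 'k" where
  "res C x a = a 0 / kid C x 0"

definition simp_mod :: "('o, 'k::field) kcat \<Rightarrow> 'o \<Rightarrow> ('o, 'k) kmod" where
  "simp_mod C x = \<lparr>mdim = (\<lambda>y. if y = x then 1 else 0),
     mact = (\<lambda>p q a v. if p = x \<and> q = x then vsmult (res C x a) v else vzero)\<rparr>"

lemma res_lin: "res C x (vadd (vsmult c a) b) = c * res C x a + res C x b"
  by (simp add: res_def vadd_def vsmult_def add_divide_distrib)
lemma res_smult: "res C x (vsmult c a) = c * res C x a"
  by (simp add: res_def vsmult_def)

context
  fixes C :: "('o, 'k::field) kcat" and x :: 'o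
  assumes lb: "locally_bounded C" and hx: "hdim C x x = 1"
begin

lemma kc: "k_category C" using lb unfolding locally_bounded_def by blast

lemma lend: "local_end C y" using lb unfolding locally_bounded_def by blast

lemma noiso: "y \<noteq> z \<Longrightarrow> \<not> obj_iso C y z" using lb unfolding locally_bounded_def by blast

lemma kid_nz: "kid C y \<noteq> vzero" using lend unfolding local_end_def by blast

lemma kappa_nz: "kid C x 0 \<noteq> 0"
proof
  assume k0: "kid C x 0 = 0"
  have "kid C x \<in> kspace 1" using kid_hom[OF kc, of x] hx by (simp add: hom_def)
  then have "\<forall>i. kid C x i = 0" using k0 unfolding kspace_def
    by (intro allI, case_tac "i = 0") auto
  then show False using kid_nz[of x] by (simp add: vzero_def fun_eq_iff)
qed

lemma res_kid: "res C x (kid C x) = 1"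
  using kappa_nz by (simp add: res_def)

lemma one_dim: "a \<in> hom C x x \<Longrightarrow> a = vsmult (res C x a) (kid C x)"
proof -
  assume a: "a \<in> hom C x x"
  have ak: "a \<in> kspace 1" "kid C x \<in> kspace 1" using a kid_hom[OF kc, of x] hx by (auto simp: hom_def)
  show ?thesis
  proof
    fix i
    show "a i = vsmult (res C x a) (kid C x) i"
    proof (cases "i = 0")
      case True then show ?thesis using kappa_nz by (simp add: vsmult_def res_def)
    next
      case False then show ?thesis using ak by (simp add: vsmult_def kspace_def)
    qed
  qed
qed

lemma res_comp_xx: "a \<in> hom C x x \<Longrightarrow> b \<in> hom C x x \<Longrightarrow>
   res C x (kcomp C x x x a b) = res C x a * res C x b"
proof -
  assume a: "a \<in> hom C x x" and b: "b \<in> hom C x x"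
  have "kcomp C x x x a b = kcomp C x x x a (vsmult (res C x b) (kid C x))"
    using one_dim[OF b] by simp
  also have "\<dots> = vsmult (res C x b) a"
    using kc_smult_r[OF kc a kid_hom[OF kc]] kc_idr[OF kc a] by simp
  finally show ?thesis by (simp add: res_smult)
qed

lemma is_unit_kid: "is_unit_end C y (kid C y)"
  unfolding is_unit_end_def using kid_hom[OF kc] kc_idl[OF kc] by blast

lemma res_retract:
  assumes q: "q \<noteq> x" and a: "a \<in> hom C x q" and b: "b \<in> hom C q x"
  shows "res C x (kcomp C x q x a b) = 0"
proof (rule ccontr)
  let ?c = "res C x (kcomp C x q x a b)"
  assume c: "?c \<noteq> 0"
  have ab: "kcomp C x q x a b \<in> hom C x x" using kc_closed[OF kc a b] .
  define a' where "a' = vsmult (1 / ?c) a"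
  have a': "a' \<in> hom C x q" using a by (simp add: a'_def hom_smult)
  have a'b: "kcomp C x q x a' b = kid C x"
  proof -
    have "kcomp C x q x a' b = vsmult (1 / ?c) (kcomp C x q x a b)"
      unfolding a'_def using kc_smult_l[OF kc a b] .
    also have "\<dots> = vsmult (1 / ?c) (vsmult ?c (kid C x))"
      using one_dim[OF ab] by simp
    also have "\<dots> = kid C x" using c by simp
    finally show ?thesis .
  qed
  define e where "e = kcomp C q x q b a'"
  have e: "e \<in> hom C q q" unfolding e_def using kc_closed[OF kc b a'] .
  have ee: "kcomp C q q q e e = e"
  proof -
    have "kcomp C q q q e e = kcomp C q x q b (kcomp C x q q a' e)"
      unfolding e_def using kc_assoc[OF kc b a' e] e_def by simp
    also have "kcomp C x q q a' e = kcomp C x x q (kcomp C x q x a' b) a'"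
      unfolding e_def using kc_assoc[OF kc a' b a'] .
    also have "\<dots> = a'" using a'b kc_idl[OF kc a'] by simp
    finally show ?thesis unfolding e_def .
  qed
  define f where "f = vadd (kid C q) (vsmult (-1) e)"
  have f: "f \<in> hom C q q" unfolding f_def using hom_comb[OF kid_hom[OF kc] hom_smult[OF e], of 1] by simp
  have ef: "vadd e f = kid C q"
    unfolding f_def by (simp add: vadd_def vsmult_def fun_eq_iff)
  have H: "\<forall>a\<in>hom C q q. \<forall>b\<in>hom C q q. \<not> is_unit_end C q a \<longrightarrow> \<not> is_unit_end C q b \<longrightarrow>
        \<not> is_unit_end C q (vadd a b)" using lend[of q] unfolding local_end_def by (rule conjunct2)
  have "is_unit_end C q e \<or> is_unit_end C q f"
  proof (rule ccontr)
    assume "\<not> (is_unit_end C q e \<or> is_unit_end C q f)"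
    then have "\<not> is_unit_end C q (vadd e f)" using H e f by blast
    then show False using ef is_unit_kid[of q] by simp
  qed
  then show False
  proof
    assume "is_unit_end C q e"
    then obtain u where u: "u \<in> hom C q q" "kcomp C q q q e u = kid C q"
      unfolding is_unit_end_def by blast
    have "e = kcomp C q q q e (kid C q)" using kc_idr[OF kc e] by (rule sym)
    also have "\<dots> = kcomp C q q q e (kcomp C q q q e u)" by (simp only: u(2))
    also have "\<dots> = kcomp C q q q (kcomp C q q q e e) u" using kc_assoc[OF kc e e u(1)] .
    also have "\<dots> = kid C q" unfolding ee by (rule u(2))
    finally have "kcomp C q x q b a' = kid C q" unfolding e_def .
    then have "obj_iso C x q" unfolding obj_iso_def using a' b a'b by blast
    then show False using noiso[of x q] q by blast
  next
    assume "is_unit_end C q f"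
    then obtain u where u: "u \<in> hom C q q" "kcomp C q q q u f = kid C q"
      unfolding is_unit_end_def by blast
    have fe: "kcomp C q q q f e = vzero"
    proof -
      have "kcomp C q q q f e = vadd (vsmult 1 (kcomp C q q q (kid C q) e)) (kcomp C q q q (vsmult (-1) e) e)"
        using kc_linl[OF kc kid_hom[OF kc] hom_smult[OF e] e, of 1] unfolding f_def by simp
      also have "\<dots> = vadd e (vsmult (-1) e)"
        using kc_idl[OF kc e] kc_smult_l[OF kc e e] ee by simp
      also have "\<dots> = vzero" by (simp add: vadd_def vsmult_def vzero_def)
      finally show ?thesis .
    qed
    have "e = kcomp C q q q (kid C q) e" using kc_idl[OF kc e] by (rule sym)
    also have "\<dots> = kcomp C q q q (kcomp C q q q u f) e" by (simp only: u(2))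
    also have "\<dots> = kcomp C q q q u (kcomp C q q q f e)" using kc_assoc[OF kc u(1) f e] by (rule sym)
    also have "\<dots> = vzero" unfolding fe by (rule kc_zero_r[OF kc u(1)])
    finally have e0: "e = vzero" .
    have "kid C x = kcomp C x x x (kid C x) (kid C x)" using kc_idl[OF kc kid_hom[OF kc]] by (rule sym)
    also have "\<dots> = kcomp C x x x (kcomp C x q x a' b) (kcomp C x q x a' b)" by (simp only: a'b)
    also have "\<dots> = kcomp C x q x a' (kcomp C q x x b (kcomp C x q x a' b))"
      using kc_assoc[OF kc a' b kc_closed[OF kc a' b]] by (rule sym)
    also have "kcomp C q x x b (kcomp C x q x a' b) = kcomp C q q x (kcomp C q x q b a') b"
      using kc_assoc[OF kc b a' b] .
    also have "\<dots> = vzero" using e0 kc_zero_l[OF kc b] unfolding e_def by (simp only:)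
    also have "kcomp C x q x a' vzero = vzero" using kc_zero_r[OF kc a'] .
    finally show False using kid_nz by blast
  qed
qed

end


lemma ks1_zero: "w \<in> kspace 1 \<Longrightarrow> w 0 = 0 \<Longrightarrow> w = vzero"
proof (rule ext)
  fix i assume "w \<in> kspace 1" "w 0 = 0"
  then show "w i = vzero i" by (cases "i = 0") (auto simp: kspace_def vzero_def)
qed

lemma ks1_mult: "w \<in> kspace 1 \<Longrightarrow> u \<in> kspace 1 \<Longrightarrow> u 0 \<noteq> 0 \<Longrightarrow> w = vsmult (w 0 / u 0) (u :: nat \<Rightarrow> 'k::field)"
proof (rule ext)
  fix i assume "w \<in> kspace 1" "u \<in> kspace 1" "u 0 \<noteq> 0"
  then show "w i = vsmult (w 0 / u 0) u i" by (cases "i = 0") (auto simp: kspace_def vsmult_def)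
qed

lemma aut_group_simps[simp]: "carrier (aut_group C Gs) = Gs" "mult (aut_group C Gs) = aut_comp C"
  "one (aut_group C Gs) = aut_id"
  by (auto simp: aut_group_def)

lemma fst_aut_comp[simp]: "fst (aut_comp C g h) = fst g \<circ> fst h" by (simp add: aut_comp_def)
lemma fst_aut_id[simp]: "fst aut_id = id" by (simp add: aut_id_def)

context
  fixes C :: "('o, 'k::field) kcat" and x :: 'o
  assumes lb: "locally_bounded C" and hx: "hdim C x x = 1"
begin

lemma kc': "k_category C" by (rule kc[OF lb hx])

lemma mdim_S[simp]: "mdim (simp_mod C x) y = (if y = x then 1 else 0)" by (simp add: simp_mod_def)
lemma mact_S[simp]: "mact (simp_mod C x) p q a v = (if p = x \<and> q = x then vsmult (res C x a) v else vzero)"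
  by (simp add: simp_mod_def)

lemma S_module: "is_module C (simp_mod C x)"
  unfolding is_module_def
proof (intro conjI allI impI)
  fix p q and a :: "nat \<Rightarrow> 'k" assume a: "a \<in> hom C p q"
  show "linear_on (mdim (simp_mod C x) q) (mdim (simp_mod C x) p) (mact (simp_mod C x) p q a)"
  proof (cases "p = x \<and> q = x")
    case True
    then show ?thesis
      by (auto simp: linear_on_def kspace_smult) (simp add: vsmult_def vadd_def fun_eq_iff ring_distribs)
  next
    case False
    then show ?thesis by (auto simp: linear_on_def)
  qed
next
  fix p q a b c and v :: "nat \<Rightarrow> 'k" assume "a \<in> hom C p q" "b \<in> hom C p q" "v \<in> kspace (mdim (simp_mod C x) q)"
  show "mact (simp_mod C x) p q (vadd (vsmult c a) b) v =
       vadd (vsmult c (mact (simp_mod C x) p q a v)) (mact (simp_mod C x) p q b v)"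
    by (cases "p = x \<and> q = x") (auto simp: res_lin, auto simp: vsmult_def vadd_def vzero_def fun_eq_iff ring_distribs)
next
  fix p and v :: "nat \<Rightarrow> 'k" assume v: "v \<in> kspace (mdim (simp_mod C x) p)"
  show "mact (simp_mod C x) p p (kid C p) v = v"
  proof (cases "p = x")
    case True then show ?thesis using res_kid[OF lb hx] by simp
  next
    case False then show ?thesis using v by (simp add: kspace0)
  qed
next
  fix p q r a b and v :: "nat \<Rightarrow> 'k"
  assume a: "a \<in> hom C p q" and b: "b \<in> hom C q r" and v: "v \<in> kspace (mdim (simp_mod C x) r)"
  show "mact (simp_mod C x) p r (kcomp C p q r a b) v =
        mact (simp_mod C x) p q a (mact (simp_mod C x) q r b v)"
  proof (cases "p = x \<and> r = x")
    case True
    show ?thesis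
    proof (cases "q = x")
      case qx: True
      then show ?thesis using True a b res_comp_xx[OF lb hx, of a b] by (simp add: mult.commute)
    next
      case qx: False
      then show ?thesis using True a b res_retract[OF lb hx qx, of a b] by simp
    qed
  next
    case False then show ?thesis by auto
  qed
qed

lemma S_indec: "indecomposable C (simp_mod C x)"
  unfolding indecomposable_def
proof (intro conjI allI impI)
  show "is_module C (simp_mod C x)" by (rule S_module)
  show "\<exists>y. mdim (simp_mod C x) y \<noteq> 0" by (rule exI[of _ x]) simp
next
  fix U V assume U: "is_submodule C (simp_mod C x) U" and V: "is_submodule C (simp_mod C x) V"
    and UV: "\<forall>y. U y \<inter> V y = {vzero} \<and> {vadd u v |u v. u \<in> U y \<and> v \<in> V y} = kspace (mdim (simp_mod C x) y)"
  have Uo: "U y = {vzero}" if "y \<noteq> x" for y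
  proof -
    have "U y \<subseteq> kspace (mdim (simp_mod C x) y)" "vzero \<in> U y" using U unfolding is_submodule_def by auto
    then show ?thesis using that by (auto simp: kspace0)
  qed
  have Vo: "V y = {vzero}" if "y \<noteq> x" for y
  proof -
    have "V y \<subseteq> kspace (mdim (simp_mod C x) y)" "vzero \<in> V y" using V unfolding is_submodule_def by auto
    then show ?thesis using that by (auto simp: kspace0)
  qed
  have Usub: "U x \<subseteq> kspace (mdim (simp_mod C x) x)" "vzero \<in> U x" "\<forall>u\<in>U x. \<forall>w\<in>U x. \<forall>c. vadd (vsmult c u) w \<in> U x"
    using U unfolding is_submodule_def by blast+
  have Vsub: "V x \<subseteq> kspace (mdim (simp_mod C x) x)" "vzero \<in> V x"
    using V unfolding is_submodule_def by blast+
  show "(\<forall>y. U y = {vzero}) \<or> (\<forall>y. V y = {vzero})"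
  proof (rule ccontr)
    assume "\<not> ?thesis"
    then have "U x \<noteq> {vzero}" "V x \<noteq> {vzero}" using Uo Vo by metis+
    then obtain u v where u: "u \<in> U x" "u \<noteq> vzero" and v: "v \<in> V x" "v \<noteq> vzero"
      using Usub(2) Vsub(2) by blast
    have u1: "u \<in> kspace 1" and v1: "v \<in> kspace 1" using u v Usub Vsub by auto
    have u0: "u 0 \<noteq> 0" using ks1_zero[OF u1] u by blast
    have "v = vsmult (v 0 / u 0) u" by (rule ks1_mult[OF v1 u1 u0])
    also have "\<dots> = vadd (vsmult (v 0 / u 0) u) vzero" by simp
    also have "\<dots> \<in> U x" using Usub u by blast
    finally have "v \<in> U x \<inter> V x" using v by blast
    then show False using UV v by blast
  qed
qed

lemma S_finite: "finite (supp (simp_mod C x))"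
proof -
  have "supp (simp_mod C x) = {x}" by (auto simp: supp_def)
  then show ?thesis by simp
qed

lemma S_twist:
  assumes h: "is_kaut C h" and hx1: "fst h x = x" and hinj: "\<And>y. fst h y = x \<Longrightarrow> y = x"
  shows "mod_iso C (mod_twist (simp_mod C x) h) (simp_mod C x)"
proof (rule mod_iso_agree)
  have iff: "fst h y = x \<longleftrightarrow> y = x" for y using hx1 hinj by blast
  show "mdim (mod_twist (simp_mod C x) h) = mdim (simp_mod C x)"
    by (auto simp: mod_twist_def iff fun_eq_iff)
  fix p q a and v :: "nat \<Rightarrow> 'k" assume a: "a \<in> hom C p q"
  show "mact (mod_twist (simp_mod C x) h) p q a v = mact (simp_mod C x) p q a v"
  proof (cases "p = x \<and> q = x")
    case True
    have lin: "linear_on (hdim C x x) (hdim C x x) (snd h x x)"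
      using h hx1 unfolding is_kaut_def by metis
    have kidh: "snd h x x (kid C x) = kid C x" using h hx1 unfolding is_kaut_def by metis
    have ax: "a \<in> hom C x x" using a True by simp
    have "snd h x x a = snd h x x (vsmult (res C x a) (kid C x))"
      using one_dim[OF lb hx ax] by simp
    also have "\<dots> = vsmult (res C x a) (kid C x)"
      using lin_smult[OF lin, of "kid C x"] kid_hom[OF kc'] kidh by (simp add: hom_def)
    finally have "res C x (snd h x x a) = res C x a" using res_kid[OF lb hx] by (simp add: res_smult)
    then show ?thesis using True hx1 by (simp add: mod_twist_def)
  next
    case False then show ?thesis by (auto simp: mod_twist_def iff)
  qed
qed

lemma free_fix:
  assumes Gs: "Gs \<subseteq> {g. is_kaut C g}" and grp: "group (aut_group C Gs)"
    and fr: "acts_freely_ind C Gs" and g: "g \<in> Gs" and gx: "fst g x = x"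
  shows "g = aut_id"
proof (rule ccontr)
  assume ne: "g \<noteq> aut_id"
  let ?h = "inv\<^bsub>aut_group C Gs\<^esub> g"
  have hG: "?h \<in> Gs" using group.inv_closed[OF grp] g by simp
  have gh: "aut_comp C g ?h = aut_id" using group.r_inv[OF grp] g by simp
  have hg: "aut_comp C ?h g = aut_id" using group.l_inv[OF grp] g by simp
  have gh': "fst g (fst ?h y) = y" for y using arg_cong[OF gh, of fst] by (simp add: fun_eq_iff)
  have hg': "fst ?h (fst g y) = y" for y using arg_cong[OF hg, of fst] by (simp add: fun_eq_iff)
  have hx1: "fst ?h x = x" using hg'[of x] gx by simp
  have hinj: "fst ?h y = x \<Longrightarrow> y = x" for y using gh'[of y] gx by simp
  have "mod_iso C (gtwist C Gs g (simp_mod C x)) (simp_mod C x)"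
    unfolding gtwist_def using S_twist[OF _ hx1 hinj] hG Gs by blast
  then show False using fr S_module S_finite S_indec g ne unfolding acts_freely_ind_def by blast
qed

end


lemma lp_succ: "lpath ori i (i + 1) = ori i"
proof -
  have "(\<forall>m. i \<le> m \<and> m < i + 1 \<longrightarrow> ori m) = ori i"
  proof
    assume "\<forall>m. i \<le> m \<and> m < i + 1 \<longrightarrow> ori m" then show "ori i" by auto
  next
    assume "ori i"
    show "\<forall>m. i \<le> m \<and> m < i + 1 \<longrightarrow> ori m"
    proof (intro allI impI)
      fix m :: int assume "i \<le> m \<and> m < i + 1" then have "m = i" by simp
      then show "ori m" using \<open>ori i\<close> by simp
    qed
  qed
  then show ?thesis unfolding lpath_def by auto
qed

lemma lp_pred: "lpath ori (i + 1) i = (\<not> ori i)"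
proof -
  have "(\<forall>m. i \<le> m \<and> m < i + 1 \<longrightarrow> \<not> ori m) = (\<not> ori i)"
  proof
    assume "\<forall>m. i \<le> m \<and> m < i + 1 \<longrightarrow> \<not> ori m" then show "\<not> ori i" by auto
  next
    assume "\<not> ori i"
    show "\<forall>m. i \<le> m \<and> m < i + 1 \<longrightarrow> \<not> ori m"
    proof (intro allI impI)
      fix m :: int assume "i \<le> m \<and> m < i + 1" then have "m = i" by simp
      then show "\<not> ori m" using \<open>\<not> ori i\<close> by simp
    qed
  qed
  then show ?thesis unfolding lpath_def by auto
qed

lemma lp_between1:
  assumes "lpath ori i k" "lpath ori k j" "i < j"
  shows "i \<le> k \<and> k \<le> j"
proof (rule ccontr)
  assume "\<not> (i \<le> k \<and> k \<le> j)"
  then consider "k < i" | "j < k" by linarith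
  then show False
  proof cases
    case 1
    then have "\<forall>m. k \<le> m \<and> m < i \<longrightarrow> \<not> ori m" using assms(1) unfolding lpath_def by auto
    moreover have "\<forall>m. k \<le> m \<and> m < j \<longrightarrow> ori m" using assms(2,3) 1 unfolding lpath_def by auto
    ultimately show False using 1 assms(3) by auto
  next
    case 2
    then have "\<forall>m. i \<le> m \<and> m < k \<longrightarrow> ori m" using assms(1,3) unfolding lpath_def by auto
    moreover have "\<forall>m. j \<le> m \<and> m < k \<longrightarrow> \<not> ori m" using assms(2) 2 unfolding lpath_def by auto
    ultimately show False using 2 assms(3) by auto
  qed
qed

lemma lp_between2:
  assumes "lpath ori i k" "lpath ori k j" "j < i"
  shows "j \<le> k \<and> k \<le> i"
proof (rule ccontr)
  assume "\<not> (j \<le> k \<and> k \<le> i)"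
  then consider "k < j" | "i < k" by linarith
  then show False
  proof cases
    case 1
    then have "\<forall>m. k \<le> m \<and> m < i \<longrightarrow> \<not> ori m" using assms(1,3) unfolding lpath_def by auto
    moreover have "\<forall>m. k \<le> m \<and> m < j \<longrightarrow> ori m" using assms(2) 1 unfolding lpath_def by auto
    ultimately show False using 1 assms(3) by auto
  next
    case 2
    then have "\<forall>m. i \<le> m \<and> m < k \<longrightarrow> ori m" using assms(1) unfolding lpath_def by auto
    moreover have "\<forall>m. j \<le> m \<and> m < k \<longrightarrow> \<not> ori m" using assms(2,3) 2 unfolding lpath_def by auto
    ultimately show False using 2 assms(3) by auto
  qed
qed

definition Adj :: "(int \<Rightarrow> bool) \<Rightarrow> int set \<Rightarrow> int \<Rightarrow> int \<Rightarrow> bool" where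
  "Adj ori I i j \<longleftrightarrow> i \<noteq> j \<and>
     ((lpath ori i j \<and> \<not> (\<exists>k\<in>I. k \<noteq> i \<and> k \<noteq> j \<and> lpath ori i k \<and> lpath ori k j)) \<or>
      (lpath ori j i \<and> \<not> (\<exists>k\<in>I. k \<noteq> i \<and> k \<noteq> j \<and> lpath ori j k \<and> lpath ori k i)))"

lemma Adj_sym: "Adj ori I i j = Adj ori I j i"
  unfolding Adj_def by blast

lemma Adj_lt:
  assumes conv: "\<And>a b c. a \<in> I \<Longrightarrow> c \<in> I \<Longrightarrow> a \<le> b \<Longrightarrow> b \<le> c \<Longrightarrow> b \<in> I"
    and i: "i \<in> I" and j: "j \<in> I" and lt: "i < j"
  shows "Adj ori I i j \<longleftrightarrow> j = i + 1"
proof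
  assume adj: "Adj ori I i j"
  show "j = i + 1"
  proof (rule ccontr)
    assume "j \<noteq> i + 1"
    then have lt2: "i + 1 < j" using lt by simp
    have k: "i + 1 \<in> I" using conv[OF i j, of "i+1"] lt by simp
    have A: "\<exists>k\<in>I. k \<noteq> i \<and> k \<noteq> j \<and> lpath ori i k \<and> lpath ori k j" if lij: "lpath ori i j"
    proof -
      have o: "\<forall>m. i \<le> m \<and> m < j \<longrightarrow> ori m" using lij lt unfolding lpath_def by auto
      then have "lpath ori i (i + 1)" using lt2 by (simp add: lp_succ)
      moreover have "lpath ori (i + 1) j" using o lt2 unfolding lpath_def by auto
      moreover have "i + 1 \<noteq> i" "i + 1 \<noteq> j" using lt2 by auto
      ultimately show ?thesis using k by blast
    qed
    have B: "\<exists>k\<in>I. k \<noteq> i \<and> k \<noteq> j \<and> lpath ori j k \<and> lpath ori k i" if lji: "lpath ori j i"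
    proof -
      have o: "\<forall>m. i \<le> m \<and> m < j \<longrightarrow> \<not> ori m" using lji lt unfolding lpath_def by auto
      then have "lpath ori (i + 1) i" using lt2 by (simp add: lp_pred)
      moreover have "lpath ori j (i + 1)" using o lt2 unfolding lpath_def by auto
      moreover have "i + 1 \<noteq> i" "i + 1 \<noteq> j" using lt2 by auto
      ultimately show ?thesis using k by blast
    qed
    show False using adj A B unfolding Adj_def by blast
  qed
next
  assume ji: "j = i + 1"
  have no1: "\<not> (\<exists>k\<in>I. k \<noteq> i \<and> k \<noteq> j \<and> lpath ori i k \<and> lpath ori k j)"
  proof
    assume "\<exists>k\<in>I. k \<noteq> i \<and> k \<noteq> j \<and> lpath ori i k \<and> lpath ori k j"
    then obtain k where "k \<noteq> i" "k \<noteq> j" "lpath ori i k" "lpath ori k j" by blast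
    then show False using lp_between1[of ori i k j] lt ji by auto
  qed
  have no2: "\<not> (\<exists>k\<in>I. k \<noteq> i \<and> k \<noteq> j \<and> lpath ori j k \<and> lpath ori k i)"
  proof
    assume "\<exists>k\<in>I. k \<noteq> i \<and> k \<noteq> j \<and> lpath ori j k \<and> lpath ori k i"
    then obtain k where "k \<noteq> i" "k \<noteq> j" "lpath ori j k" "lpath ori k i" by blast
    then show False using lp_between2[of ori j k i] lt ji by auto
  qed
  show "Adj ori I i j"
  proof (cases "ori i")
    case True
    then have "lpath ori i j" using ji lp_succ by simp
    then show ?thesis using no1 lt unfolding Adj_def by auto
  next
    case False
    then have "lpath ori j i" using ji lp_pred by simp
    then show ?thesis using no2 lt unfolding Adj_def by auto
  qed
qed

lemma Adj_iff:
  assumes conv: "\<And>a b c. a \<in> I \<Longrightarrow> c \<in> I \<Longrightarrow> a \<le> b \<Longrightarrow> b \<le> c \<Longrightarrow> b \<in> I"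
    and i: "i \<in> I" and j: "j \<in> I"
  shows "Adj ori I i j \<longleftrightarrow> \<bar>i - j\<bar> = 1"
proof -
  consider "i < j" | "i = j" | "j < i" by linarith
  then show ?thesis
  proof cases
    case 1 then show ?thesis using Adj_lt[OF conv i j] by auto
  next
    case 2 then show ?thesis unfolding Adj_def by simp
  next
    case 3 then show ?thesis using Adj_lt[OF conv j i] Adj_sym by auto
  qed
qed

lemma Adj_pres:
  assumes bij: "bij_betw \<sigma> I I"
    and pres: "\<forall>i\<in>I. \<forall>j\<in>I. lpath ori (\<sigma> i) (\<sigma> j) = lpath ori i j"
    and i: "i \<in> I" and j: "j \<in> I"
  shows "Adj ori I (\<sigma> i) (\<sigma> j) = Adj ori I i j"
proof -
  have inj: "\<And>a b. a \<in> I \<Longrightarrow> b \<in> I \<Longrightarrow> \<sigma> a = \<sigma> b \<longleftrightarrow> a = b"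
    using bij unfolding bij_betw_def inj_on_def by blast
  have ex: "\<And>P. (\<exists>k\<in>I. P k) = (\<exists>k\<in>I. P (\<sigma> k))"
    using bij unfolding bij_betw_def by (metis imageE image_eqI)
  have e1: "(\<exists>k\<in>I. k \<noteq> \<sigma> i \<and> k \<noteq> \<sigma> j \<and> lpath ori (\<sigma> i) k \<and> lpath ori k (\<sigma> j)) =
        (\<exists>k\<in>I. k \<noteq> i \<and> k \<noteq> j \<and> lpath ori i k \<and> lpath ori k j)"
    apply (subst ex)
    using inj pres i j by (meson)
  have e2: "(\<exists>k\<in>I. k \<noteq> \<sigma> i \<and> k \<noteq> \<sigma> j \<and> lpath ori (\<sigma> j) k \<and> lpath ori k (\<sigma> i)) =
        (\<exists>k\<in>I. k \<noteq> i \<and> k \<noteq> j \<and> lpath ori j k \<and> lpath ori k i)"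
    apply (subst ex)
    using inj pres i j by (meson)
  show ?thesis unfolding Adj_def using e1 e2 inj[OF i j] pres i j by simp
qed


lemma sigma_class:
  fixes \<sigma> :: "int \<Rightarrow> int"
  assumes I: "I = {0..} \<or> I = UNIV" and bij: "bij_betw \<sigma> I I"
    and pres: "\<forall>i\<in>I. \<forall>j\<in>I. lpath ori (\<sigma> i) (\<sigma> j) = lpath ori i j"
  shows "(\<exists>i\<in>I. \<sigma> i = i) \<or> (I = UNIV \<and> (\<forall>i. \<sigma> i = i + \<sigma> 0))"
proof -
  have conv: "\<And>a b c. a \<in> I \<Longrightarrow> c \<in> I \<Longrightarrow> a \<le> b \<Longrightarrow> b \<le> c \<Longrightarrow> b \<in> I"
    using I by auto
  have nn: "\<And>i. 0 \<le> i \<Longrightarrow> i \<in> I" using I by auto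
  have sI: "\<And>i. i \<in> I \<Longrightarrow> \<sigma> i \<in> I" using bij by (meson bij_betwE)
  have inj: "\<And>a b. a \<in> I \<Longrightarrow> b \<in> I \<Longrightarrow> \<sigma> a = \<sigma> b \<Longrightarrow> a = b"
    using bij unfolding bij_betw_def inj_on_def by blast
  have step1: "\<bar>\<sigma> i - \<sigma> (i + 1)\<bar> = 1" if i: "i \<in> I" and i1: "i + 1 \<in> I" for i
  proof -
    have "Adj ori I i (i + 1)" using Adj_iff[OF conv i i1] by simp
    then have "Adj ori I (\<sigma> i) (\<sigma> (i + 1))" using Adj_pres[OF bij pres i i1] by simp
    then show ?thesis using Adj_iff[OF conv sI[OF i] sI[OF i1]] by simp
  qed
  define d where "d i = \<sigma> (i + 1) - \<sigma> i" for i
  have d1: "d i = 1 \<or> d i = -1" if "i \<in> I" "i + 1 \<in> I" for i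
    using step1[OF that] unfolding d_def by linarith
  have d2: "d (i + 1) = d i" if i: "i \<in> I" and i2: "i + 2 \<in> I" for i
  proof (rule ccontr)
    assume ne: "d (i + 1) \<noteq> d i"
    have i1: "i + 1 \<in> I" using conv[OF i i2, of "i+1"] by simp
    have "d (i + 1) = 1 \<or> d (i + 1) = -1" using d1[of "i+1"] i1 i2 by (simp add: add.assoc)
    moreover have "d i = 1 \<or> d i = -1" using d1 i i1 by blast
    ultimately have "d (i + 1) + d i = 0" using ne by auto
    then have "\<sigma> (i + 2) = \<sigma> i" unfolding d_def by (simp add: add.assoc)
    then have "i + 2 = i" using inj i i2 by blast
    then show False by simp
  qed
  have pos: "d (int n) = d 0" for n
  proof (induction n)
    case 0 then show ?case by simp
  next
    case (Suc n)
    have "d (int n + 1) = d (int n)" using d2[of "int n"] nn by simp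
    then show ?case using Suc by (simp add: add.commute)
  qed
  have posS: "\<sigma> (int n) = \<sigma> 0 + d 0 * int n" for n
  proof (induction n)
    case 0 then show ?case by simp
  next
    case (Suc n)
    have "\<sigma> (int n + 1) = \<sigma> (int n) + d (int n)" unfolding d_def by simp
    then show ?case using Suc pos[of n] by (simp add: algebra_simps)
  qed
  have neg: "d (- int n) = d 0" if U: "I = UNIV" for n
  proof (induction n)
    case 0 then show ?case by simp
  next
    case (Suc n)
    have "d (- int n - 1 + 1) = d (- int n - 1)" using d2[of "- int n - 1"] U by simp
    moreover have "- int (Suc n) = - int n - 1" by simp
    ultimately show ?case using Suc by (metis diff_add_cancel)
  qed
  have negS: "\<sigma> (- int n) = \<sigma> 0 - d 0 * int n" if U: "I = UNIV" for n
  proof (induction n)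
    case 0 then show ?case by simp
  next
    case (Suc n)
    define j where "j = - int n - 1"
    have e: "- int (Suc n) = j" "- int n = j + 1" by (simp_all add: j_def)
    have "\<sigma> (j + 1) = \<sigma> j + d j" unfolding d_def by simp
    moreover have "d j = d 0" using neg[OF U, of "Suc n"] e(1) by simp
    ultimately show ?case unfolding e(1) using Suc e(2) by (simp add: algebra_simps)
  qed
  have lin: "\<sigma> i = \<sigma> 0 + d 0 * i" if i: "i \<in> I" for i
  proof (cases "0 \<le> i")
    case True
    then show ?thesis using posS[of "nat i"] by simp
  next
    case False
    then have U: "I = UNIV" using I i by auto
    then show ?thesis using negS[OF U, of "nat (- i)"] False by simp
  qed
  have d0: "d 0 = 1 \<or> d 0 = -1" using d1[of 0] nn by simp
  then show ?thesis
  proof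
    assume d01: "d 0 = 1"
    show ?thesis
    proof (cases "I = UNIV")
      case True
      have "\<sigma> i = i + \<sigma> 0" for i
      proof -
        have "\<sigma> i = \<sigma> 0 + d 0 * i" using lin True by blast
        then show ?thesis using d01 by simp
      qed
      then show ?thesis using True by blast
    next
      case False
      then have I0: "I = {0..}" using I by blast
      obtain j where j: "j \<in> I" "\<sigma> j = 0" using bij nn[of 0] unfolding bij_betw_def by (metis imageE order_refl)
      have "\<sigma> 0 \<in> I" using sI nn by simp
      then have "\<sigma> 0 \<ge> 0" using I0 by simp
      moreover have "j \<ge> 0" using j I0 by simp
      moreover have "\<sigma> j = \<sigma> 0 + j" using lin[OF j(1)] d01 by simp
      ultimately have "j = 0" using j by simp
      then show ?thesis using j by blast
    qed
  next
    assume d01: "d 0 = -1"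
    show ?thesis
    proof (cases "I = UNIV")
      case False
      then have I0: "I = {0..}" using I by blast
      have "\<sigma> 0 \<in> I" using sI nn by simp
      then have j: "\<sigma> 0 + 1 \<in> I" using I0 by simp
      have "\<sigma> (\<sigma> 0 + 1) = -1" using lin[OF j] d01 by simp
      then show ?thesis using sI[OF j] I0 by simp
    next
      case U: True
      define t where "t = \<sigma> 0"
      have lt: "\<sigma> i = t - i" for i using lin[of i] U d01 t_def by simp
      show ?thesis
      proof (cases "even t")
        case True
        then obtain m where "t = 2 * m" by (metis evenE)
        then have "\<sigma> m = m" using lt by simp
        then show ?thesis using U by blast
      next
        case False
        then obtain m where tm: "t = 2 * m + 1" by (metis oddE)
        have s1: "\<sigma> m = m + 1" and s2: "\<sigma> (m + 1) = m" using lt tm by simp_all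
        have "lpath ori (\<sigma> m) (\<sigma> (m + 1)) = lpath ori m (m + 1)" using pres U by simp
        then have "lpath ori (m + 1) m = lpath ori m (m + 1)" using s1 s2 by simp
        then show ?thesis using lp_succ[of ori m] lp_pred[of ori m] by simp
      qed
    qed
  qed
qed


lemma twist_id': "mod_iso C M (mod_twist M aut_id)"
  by (rule mod_iso_agree) (auto simp: mod_twist_def aut_id_def)

context
  fixes C :: "('o, 'k::field) kcat" and Gs :: "('o, 'k) kaut set" and B :: "('o, 'k) kmod"
  assumes Gs: "Gs \<subseteq> {g. is_kaut C g}" and grp: "group (aut_group C Gs)"
    and Bmod: "is_module C B"
begin

interpretation G: group "aut_group C Gs" by (rule grp)

abbreviation "ginv g \<equiv> m_inv (aut_group C Gs) g"

lemma ginv_in: "g \<in> Gs \<Longrightarrow> ginv g \<in> Gs" using G.inv_closed[of g] by simp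
lemma ginv_r: "g \<in> Gs \<Longrightarrow> aut_comp C g (ginv g) = aut_id" using G.r_inv[of g] by simp
lemma ginv_l: "g \<in> Gs \<Longrightarrow> aut_comp C (ginv g) g = aut_id" using G.l_inv[of g] by simp
lemma ginv_inv: "g \<in> Gs \<Longrightarrow> ginv (ginv g) = g" using G.inv_inv[of g] by simp
lemma ginv_one: "ginv aut_id = aut_id" using G.inv_one by simp
lemma ginv_mult: "g \<in> Gs \<Longrightarrow> h \<in> Gs \<Longrightarrow> ginv (aut_comp C g h) = aut_comp C (ginv h) (ginv g)"
  using G.inv_mult_group[of g h] by simp
lemma kaut: "g \<in> Gs \<Longrightarrow> is_kaut C g" using Gs by blast

lemma stab_one: "aut_id \<in> stab C Gs B"
  unfolding stab_def gtwist_def using G.one_closed ginv_one twist_id by auto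

lemma stab_mult:
  assumes g: "g \<in> stab C Gs B" and h: "h \<in> stab C Gs B"
  shows "aut_comp C g h \<in> stab C Gs B"
proof -
  have gG: "g \<in> Gs" and hG: "h \<in> Gs" using g h unfolding stab_def by auto
  have ig: "mod_iso C (mod_twist B (ginv g)) B" and ih: "mod_iso C (mod_twist B (ginv h)) B"
    using g h unfolding stab_def gtwist_def by auto
  have a1: "mod_iso C (mod_twist B (aut_comp C (ginv h) (ginv g))) (mod_twist (mod_twist B (ginv h)) (ginv g))"
    by (rule twist_comp) (use kaut ginv_in gG hG in auto)
  have a2: "mod_iso C (mod_twist (mod_twist B (ginv h)) (ginv g)) (mod_twist B (ginv g))"
    by (rule mod_iso_twist[OF ih kaut[OF ginv_in[OF gG]]])
  have x: "mod_iso C (mod_twist B (ginv (aut_comp C g h))) B"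
    using mod_iso_trans[OF mod_iso_trans[OF a1 a2] ig] ginv_mult[OF gG hG] by simp
  have "aut_comp C g h \<in> Gs" using G.m_closed[of g h] gG hG by simp
  then show ?thesis using x unfolding stab_def gtwist_def by simp
qed

lemma stab_Gs: "g \<in> stab C Gs B \<Longrightarrow> g \<in> Gs" unfolding stab_def by simp

lemma twist_stab:
  assumes g: "g \<in> stab C Gs B"
  shows "mod_iso C (mod_twist B g) B"
proof -
  have gG: "g \<in> Gs" using g unfolding stab_def by auto
  have ig: "mod_iso C (mod_twist B (ginv g)) B" using g unfolding stab_def gtwist_def by auto
  have b1: "mod_iso C B (mod_twist B (aut_comp C (ginv g) g))" using twist_id'[of C B] ginv_l[OF gG] by simp
  have b2: "mod_iso C (mod_twist B (aut_comp C (ginv g) g)) (mod_twist (mod_twist B (ginv g)) g)"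
    by (rule twist_comp) (use kaut ginv_in gG in auto)
  have b3: "mod_iso C (mod_twist (mod_twist B (ginv g)) g) (mod_twist B g)"
    by (rule mod_iso_twist[OF ig kaut[OF gG]])
  have "mod_iso C B (mod_twist B g)" using mod_iso_trans[OF mod_iso_trans[OF b1 b2] b3] .
  then show ?thesis by (rule mod_iso_sym[OF Bmod])
qed

lemma stab_inv:
  assumes g: "g \<in> stab C Gs B"
  shows "ginv g \<in> stab C Gs B"
proof -
  have gG: "g \<in> Gs" using g unfolding stab_def by auto
  show ?thesis using twist_stab[OF g] ginv_in[OF gG] ginv_inv[OF gG] unfolding stab_def gtwist_def by simp
qed

lemma stab_cancel:
  assumes g: "g \<in> stab C Gs B" and h: "h \<in> stab C Gs B" and e: "aut_comp C g (ginv h) = aut_id"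
  shows "g = h"
proof -
  have gG: "g \<in> Gs" and hG: "h \<in> Gs" using g h stab_Gs by auto
  have "aut_comp C (aut_comp C g (ginv h)) h = aut_comp C g (aut_comp C (ginv h) h)"
    using G.m_assoc[of g "ginv h" h] gG hG ginv_in[OF hG] by simp
  also have "\<dots> = g" using ginv_l[OF hG] G.r_one[of g] gG by simp
  finally show ?thesis using e G.l_one[of h] hG by simp
qed

end


lemma kaut_fst_bij: "is_kaut C g \<Longrightarrow> bij (fst g)"
  unfolding is_kaut_def by (rule conjunct1)

lemma kaut_snd_bij: "is_kaut C g \<Longrightarrow> bij_betw (snd g x y) (hom C x y) (hom C (fst g x) (fst g y))"
  unfolding is_kaut_def by (drule conjunct1[OF conjunct2]) blast

theorem lemma3p3:
  fixes C :: "('o, 'k::alg_closed_field) kcat"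
    and Gs :: "('o, 'k) kaut set"
    and L :: "'o set"
    and B :: "('o, 'k) kmod"
  assumes "locally_bounded C"
    and "connected_kcat C"
    and "Gs \<subseteq> {g. is_kaut C g}"
    and "group (aut_group C Gs)"
    and "acts_freely_ind C Gs"
    and "is_line C L"
    and "is_BL C L B"
    and "weakly_G_periodic C Gs B"
  shows "(aut_group C Gs)\<lparr>carrier := stab C Gs B\<rparr> \<cong> integer_group"
proof -
  note lb = assms(1) and Gs = assms(3) and grp = assms(4) and fr = assms(5)
  interpret G: group "aut_group C Gs" by (rule grp)
  have Bmod: "is_module C B" and Bdim: "\<And>x. mdim B x = (if x \<in> L then 1 else 0)"
    using assms(7) unfolding is_BL_def by auto
  obtain I ori \<phi> where linI: "lin_index I" and phi: "bij_betw (\<phi> :: int \<Rightarrow> 'o) I L"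
    and hd: "\<forall>i\<in>I. \<forall>j\<in>I. hdim C (\<phi> i) (\<phi> j) = (if lpath ori i j then 1 else 0)"
    using assms(6) unfolding is_line_def by blast
  have suppB: "supp B = L" using Bdim by (auto simp: supp_def)
  have Linf: "infinite L" using assms(8) suppB unfolding weakly_G_periodic_def by simp
  have Iinf: "infinite I" using phi Linf bij_betw_finite by blast
  have I2: "I = {0..} \<or> I = UNIV" using linI Iinf unfolding lin_index_def by auto
  let ?H = "stab C Gs B"
  have HGs: "\<And>g. g \<in> ?H \<Longrightarrow> g \<in> Gs" by (rule stab_Gs[OF Gs grp Bmod])
  have one_H: "aut_id \<in> ?H" by (rule stab_one[OF Gs grp Bmod])
  have Lpres: "fst g y \<in> L \<longleftrightarrow> y \<in> L" if g: "g \<in> ?H" for g y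
  proof -
    have "\<exists>f :: 'o \<Rightarrow> (nat \<Rightarrow> 'k) \<Rightarrow> (nat \<Rightarrow> 'k). \<forall>x. bij_betw (f x) (kspace (mdim (mod_twist B g) x)) (kspace (mdim B x))"
      using twist_stab[OF Gs grp Bmod g] unfolding mod_iso_def by blast
    then obtain f :: "'o \<Rightarrow> (nat \<Rightarrow> 'k) \<Rightarrow> (nat \<Rightarrow> 'k)" where f: "\<forall>x. bij_betw (f x) (kspace (mdim (mod_twist B g) x)) (kspace (mdim B x))"
      by blast
    then have "bij_betw (f y) (kspace (mdim B (fst g y))) (kspace (mdim B y))"
      by (simp add: mod_twist_def)
    then have "mdim B (fst g y) = 0 \<longleftrightarrow> mdim B y = 0" by (rule kspace_bij_zero)
    then show ?thesis using Bdim by (simp split: if_splits)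
  qed
  have phiL: "\<And>i. i \<in> I \<Longrightarrow> \<phi> i \<in> L" using phi by (meson bij_betwE)
  have phiinj: "\<And>i j. i \<in> I \<Longrightarrow> j \<in> I \<Longrightarrow> \<phi> i = \<phi> j \<Longrightarrow> i = j"
    using phi unfolding bij_betw_def inj_on_def by blast
  have phiimg: "\<phi> ` I = L" using phi unfolding bij_betw_def by blast
  define \<sigma> where "\<sigma> g i = inv_into I \<phi> (fst g (\<phi> i))" for g :: "('o, 'k) kaut" and i
  have \<sigma>I: "\<sigma> g i \<in> I \<and> \<phi> (\<sigma> g i) = fst g (\<phi> i)" if g: "g \<in> ?H" and i: "i \<in> I" for g i
  proof -
    have "fst g (\<phi> i) \<in> \<phi> ` I" using Lpres[OF g] phiL[OF i] phiimg by simp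
    then show ?thesis unfolding \<sigma>_def by (simp add: inv_into_into f_inv_into_f)
  qed
  have kautH: "\<And>g. g \<in> ?H \<Longrightarrow> is_kaut C g" using HGs Gs by blast
  have fstinj: "\<And>g a b. g \<in> ?H \<Longrightarrow> fst g a = fst g b \<Longrightarrow> a = b"
    using kautH kaut_fst_bij bij_is_inj inj_eq by metis
  have fstsurj: "\<And>g y. g \<in> ?H \<Longrightarrow> \<exists>a. fst g a = y"
    using kautH kaut_fst_bij bij_is_surj surjD by metis
  have \<sigma>bij: "bij_betw (\<sigma> g) I I" if g: "g \<in> ?H" for g
  proof (rule bij_betw_imageI)
    show "inj_on (\<sigma> g) I"
    proof (rule inj_onI)
      fix i j assume i: "i \<in> I" and j: "j \<in> I" and e: "\<sigma> g i = \<sigma> g j"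
      then have "fst g (\<phi> i) = fst g (\<phi> j)" using \<sigma>I[OF g i] \<sigma>I[OF g j] by metis
      then show "i = j" using fstinj[OF g] phiinj i j by blast
    qed
    show "\<sigma> g ` I = I"
    proof
      show "\<sigma> g ` I \<subseteq> I" using \<sigma>I[OF g] by blast
      show "I \<subseteq> \<sigma> g ` I"
      proof
        fix j assume j: "j \<in> I"
        obtain y where y: "fst g y = \<phi> j" using fstsurj[OF g] by blast
        then have "y \<in> L" using Lpres[OF g, of y] phiL[OF j] by simp
        then obtain i where i: "i \<in> I" "\<phi> i = y" using phiimg by blast
        have "\<sigma> g i = j" unfolding \<sigma>_def using i y j phi
          by (simp add: bij_betw_def inv_into_f_f)
        then show "j \<in> \<sigma> g ` I" using i by blast
      qed
    qed
  qed
  have \<sigma>pres: "\<forall>i\<in>I. \<forall>j\<in>I. lpath ori (\<sigma> g i) (\<sigma> g j) = lpath ori i j" if g: "g \<in> ?H" for g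
  proof (intro ballI)
    fix i j assume i: "i \<in> I" and j: "j \<in> I"
    have "bij_betw (snd g (\<phi> i) (\<phi> j)) (hom C (\<phi> i) (\<phi> j)) (hom C (fst g (\<phi> i)) (fst g (\<phi> j)))"
      using kaut_snd_bij[OF kautH[OF g]] .
    then have "hdim C (\<phi> i) (\<phi> j) = 0 \<longleftrightarrow> hdim C (fst g (\<phi> i)) (fst g (\<phi> j)) = 0"
      unfolding hom_def by (rule kspace_bij_zero)
    then have "hdim C (\<phi> i) (\<phi> j) = 0 \<longleftrightarrow> hdim C (\<phi> (\<sigma> g i)) (\<phi> (\<sigma> g j)) = 0"
      using \<sigma>I[OF g i] \<sigma>I[OF g j] by simp
    moreover have "hdim C (\<phi> i) (\<phi> j) = (if lpath ori i j then 1 else 0)" using hd i j by blast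
    moreover have "hdim C (\<phi> (\<sigma> g i)) (\<phi> (\<sigma> g j)) = (if lpath ori (\<sigma> g i) (\<sigma> g j) then 1 else 0)"
      using hd \<sigma>I[OF g i] \<sigma>I[OF g j] by blast
    ultimately show "lpath ori (\<sigma> g i) (\<sigma> g j) = lpath ori i j"
      by (simp split: if_splits)
  qed
  have fixid: "g = aut_id" if g: "g \<in> ?H" and i: "i \<in> I" and fx: "\<sigma> g i = i" for g i
  proof -
    have "hdim C (\<phi> i) (\<phi> i) = 1" using hd i by (simp add: lpath_def)
    moreover have "fst g (\<phi> i) = \<phi> i" using \<sigma>I[OF g i] fx by simp
    ultimately show ?thesis using free_fix[OF lb _ Gs grp fr HGs[OF g]] by blast
  qed
  have triv: False if all: "\<forall>g\<in>?H. g = aut_id"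
  proof -
    have "?H = {aut_id}" using all one_H by blast
    then have "(\<lambda>x. (\<lambda>g. fst g x) ` ?H) ` supp B = (\<lambda>x. {x}) ` L" using suppB by auto
    then have "finite ((\<lambda>x. {x}) ` L)" using assms(8) unfolding weakly_G_periodic_def by simp
    then have "finite L" by (rule finite_imageD) (simp add: inj_on_def)
    then show False using Linf by simp
  qed
  have clsf: "g = aut_id \<or> (I = UNIV \<and> (\<forall>i. \<sigma> g i = i + \<sigma> g 0))" if g: "g \<in> ?H" for g
    using sigma_class[OF I2 \<sigma>bij[OF g] \<sigma>pres[OF g]] fixid[OF g] by blast
  have IU: "I = UNIV"
  proof (rule ccontr)
    assume "I \<noteq> UNIV"
    then have "\<forall>g\<in>?H. g = aut_id" using clsf by blast
    then show False by (rule triv)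
  qed
  have \<sigma>id: "\<sigma> aut_id i = i" for i
    unfolding \<sigma>_def using phiinj IU by (simp add: inv_into_f_f inj_on_def)
  have trans: "\<sigma> g i = i + \<sigma> g 0" if g: "g \<in> ?H" for g i
    using clsf[OF g] \<sigma>id by auto
  have \<sigma>comp: "\<sigma> (aut_comp C g h) i = \<sigma> g (\<sigma> h i)" if g: "g \<in> ?H" and h: "h \<in> ?H" for g h i
  proof -
    have "fst (aut_comp C g h) (\<phi> i) = fst g (\<phi> (\<sigma> h i))" using \<sigma>I[OF h, of i] IU by simp
    then show ?thesis unfolding \<sigma>_def by simp
  qed
  define \<tau> where "\<tau> g = \<sigma> g 0" for g
  have \<tau>add: "\<tau> (aut_comp C g h) = \<tau> g + \<tau> h" if g: "g \<in> ?H" and h: "h \<in> ?H" for g h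
    unfolding \<tau>_def using \<sigma>comp[OF g h, of 0] trans[OF g, of "\<sigma> h 0"] by simp
  have \<tau>zero: "g = aut_id" if g: "g \<in> ?H" and t: "\<tau> g = 0" for g
    using fixid[OF g, of 0] t IU unfolding \<tau>_def by simp
  have \<tau>id: "\<tau> aut_id = 0" unfolding \<tau>_def using \<sigma>id by simp
  have \<tau>inv: "\<tau> (m_inv (aut_group C Gs) h) = - \<tau> h" if h: "h \<in> ?H" for h
  proof -
    have hi: "m_inv (aut_group C Gs) h \<in> ?H" by (rule stab_inv[OF Gs grp Bmod h])
    have "\<tau> (aut_comp C (m_inv (aut_group C Gs) h) h) = 0"
      using ginv_l[OF Gs grp Bmod HGs[OF h]] \<tau>id by simp
    then show ?thesis using \<tau>add[OF hi h] by simp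
  qed
  have \<tau>inj: "g = h" if g: "g \<in> ?H" and h: "h \<in> ?H" and e: "\<tau> g = \<tau> h" for g h
  proof -
    have hi: "m_inv (aut_group C Gs) h \<in> ?H" by (rule stab_inv[OF Gs grp Bmod h])
    have "\<tau> (aut_comp C g (m_inv (aut_group C Gs) h)) = 0"
      using \<tau>add[OF g hi] \<tau>inv[OF h] e by simp
    then have "aut_comp C g (m_inv (aut_group C Gs) h) = aut_id"
      using \<tau>zero stab_mult[OF Gs grp Bmod g hi] by blast
    then show ?thesis by (rule stab_cancel[OF Gs grp Bmod g h])
  qed
  define S where "S = \<tau> ` ?H"
  have S0: "0 \<in> S" unfolding S_def using one_H \<tau>id by force
  have Sadd: "a + b \<in> S" if ab: "a \<in> S" "b \<in> S" for a b
  proof -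
    obtain g h where "g \<in> ?H" "h \<in> ?H" "a = \<tau> g" "b = \<tau> h" using ab unfolding S_def by blast
    then show ?thesis unfolding S_def using \<tau>add stab_mult[OF Gs grp Bmod] by (metis image_eqI)
  qed
  have Sneg: "- a \<in> S" if aS: "a \<in> S" for a
  proof -
    obtain h where "h \<in> ?H" "a = \<tau> h" using aS unfolding S_def by blast
    then show ?thesis unfolding S_def using \<tau>inv stab_inv[OF Gs grp Bmod] by (metis image_eqI)
  qed
  have Snz: "\<exists>s\<in>S. s \<noteq> 0"
  proof (rule ccontr)
    assume "\<not> ?thesis"
    then have "\<forall>g\<in>?H. g = aut_id" using \<tau>zero unfolding S_def by blast
    then show False by (rule triv)
  qed
  then obtain s0 where s0: "s0 \<in> S" "0 < s0" using Sneg
    by (metis neg_0_less_iff_less linorder_neqE_linordered_idom)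
  define P where "P n = (int n \<in> S \<and> 0 < n)" for n
  have Pex: "P (nat s0)" using s0 unfolding P_def by simp
  define n0 where "n0 = (LEAST n. P n)"
  have Pn0: "P n0" unfolding n0_def using Pex by (rule LeastI)
  define d where "d = int n0"
  have dS: "d \<in> S" and dpos: "0 < d" using Pn0 unfolding P_def d_def by auto
  have dmin: "d \<le> s" if "s \<in> S" "0 < s" for s
  proof -
    have "P (nat s)" using that unfolding P_def by simp
    then have "n0 \<le> nat s" unfolding n0_def by (rule Least_le)
    then show ?thesis using that unfolding d_def by simp
  qed
  have multN: "int n * d \<in> S" for n
  proof (induction n)
    case 0 then show ?case using S0 by simp
  next
    case (Suc n)
    then show ?case using Sadd[OF Suc dS] by (simp add: algebra_simps)
  qed
  have mult: "z * d \<in> S" for z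
  proof (cases "0 \<le> z")
    case True then show ?thesis using multN[of "nat z"] by simp
  next
    case False then show ?thesis using Sneg[OF multN[of "nat (- z)"]] by simp
  qed
  have ddvd: "d dvd s" if s: "s \<in> S" for s
  proof -
    have "s + (- (s div d)) * d \<in> S" using Sadd[OF s mult] .
    moreover have "s + (- (s div d)) * d = s mod d" by (simp add: minus_div_mult_eq_mod)
    ultimately have m: "s mod d \<in> S" by simp
    have "0 \<le> s mod d" "s mod d < d" using dpos by simp_all
    then have "s mod d = 0" using dmin[OF m] by fastforce
    then show ?thesis by (simp add: dvd_eq_mod_eq_0)
  qed
  define \<psi> where "\<psi> g = \<tau> g div d" for g
  have \<tau>S: "\<And>g. g \<in> ?H \<Longrightarrow> \<tau> g \<in> S" unfolding S_def by blast
  have "\<psi> \<in> iso ((aut_group C Gs)\<lparr>carrier := ?H\<rparr>) integer_group"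
    unfolding iso_def Group.hom_def
  proof (intro CollectI conjI ballI)
    show "\<psi> \<in> carrier ((aut_group C Gs)\<lparr>carrier := ?H\<rparr>) \<rightarrow> carrier integer_group" by simp
  next
    fix g h assume g: "g \<in> carrier ((aut_group C Gs)\<lparr>carrier := ?H\<rparr>)"
      and h: "h \<in> carrier ((aut_group C Gs)\<lparr>carrier := ?H\<rparr>)"
    then have g': "g \<in> ?H" and h': "h \<in> ?H" by simp_all
    have "\<psi> (aut_comp C g h) = \<psi> g + \<psi> h"
      unfolding \<psi>_def using \<tau>add[OF g' h'] ddvd[OF \<tau>S[OF g']] by (simp add: div_plus_div_distrib_dvd_left)
    then show "\<psi> (g \<otimes>\<^bsub>(aut_group C Gs)\<lparr>carrier := ?H\<rparr>\<^esub> h) = \<psi> g \<otimes>\<^bsub>integer_group\<^esub> \<psi> h"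
      by (simp add: aut_group_def)
  next
    show "bij_betw \<psi> (carrier ((aut_group C Gs)\<lparr>carrier := ?H\<rparr>)) (carrier integer_group)"
    proof (rule bij_betw_imageI)
      show "inj_on \<psi> (carrier ((aut_group C Gs)\<lparr>carrier := ?H\<rparr>))"
      proof (rule inj_onI)
        fix g h assume g: "g \<in> carrier ((aut_group C Gs)\<lparr>carrier := ?H\<rparr>)"
          and h: "h \<in> carrier ((aut_group C Gs)\<lparr>carrier := ?H\<rparr>)" and e: "\<psi> g = \<psi> h"
        then have g': "g \<in> ?H" and h': "h \<in> ?H" by simp_all
        have "\<tau> g = \<tau> h"
          using e ddvd[OF \<tau>S[OF g']] ddvd[OF \<tau>S[OF h']] unfolding \<psi>_def
          by (metis dvd_div_mult_self)
        then show "g = h" by (rule \<tau>inj[OF g' h'])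
      qed
      show "\<psi> ` carrier ((aut_group C Gs)\<lparr>carrier := ?H\<rparr>) = carrier integer_group"
      proof -
        have "z \<in> \<psi> ` ?H" for z :: int
        proof -
          have "z * d \<in> \<tau> ` ?H" using mult[of z] unfolding S_def .
          then obtain g where g: "g \<in> ?H" "z * d = \<tau> g" by (rule imageE)
          have tg: "\<tau> g = z * d" using g(2) by (rule sym)
          have "\<psi> g = z" unfolding \<psi>_def tg using dpos by simp
          then show ?thesis using g by blast
        qed
        then show ?thesis by auto
      qed
    qed
  qed
  then show ?thesis by (rule is_isoI)
qed


end
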